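(* Let $a\in\mathbb{C}$ and $\sigma>0$, and for integers $p\ge0$ let $F_{p,\sigma}(x)=\sum_{j=0}^p\frac{\Gamma(p-j+\sigma+1)}{\Gamma(j+1)\Gamma(p-j+1)}x^j$. Then the monic planar orthogonal polynomials with respect to the inner product $\langle f,g\rangle=\int_{\mathbb{C}}f(z)\overline{g(z)}\,\omega_\sigma(z)\,dA(z)$, $\omega_\sigma(z)=(1+|z-a|^2)e^{-\sigma|z|^2}$, are $$p_{k,\sigma}(z)=\sum_{j=0}^ka^{k-j}\frac{F_{j,\sigma}(\sigma|a|^2)}{F_{k,\sigma}(\sigma|a|^2)}z^j,\qquad k\ge0,$$ with squared norms $h_{k,\sigma}=\langle p_{k,\sigma},p_{k,\sigma}\rangle=\frac{(k+1)!}{\sigma^{k+2}}\frac{F_{k+1,\sigma}(\sigma|a|^2)}{F_{k,\sigma}(\sigma|a|^2)}$. Furthermore, for $k\ge1$, $$zp_{k,\sigma}(z)=p_{k+1,\sigma}(z)+b_kp_{k,\sigma}(z)+zc_kp_{k-1,\sigma}(z),\qquad b_k=-a\frac{F_{k,\sigma}(\sigma|a|^2)}{F_{k+1,\sigma}(\sigma|a|^2)},\quad c_k=a\frac{F_{k-1,\sigma}(\sigma|a|^2)}{F_{k,\sigma}(\sigma|a|^2)}.$$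
   Context: $dA(z)=d^2z/\pi$. Monic planar orthogonal polynomials: $p_k$ has degree $k$, leading coefficient $1$, and $\langle p_k,p_\ell\rangle=0$ for $k\neq\ell$. *)

theory Defs
  imports "HOL-Analysis.Analysis" "HOL-Computational_Algebra.Polynomial"
begin

definition Fps :: "nat \<Rightarrow> real \<Rightarrow> real \<Rightarrow> real" where
  "Fps p \<sigma> x = (\<Sum>j\<le>p. Gamma (real (p - j) + \<sigma> + 1)
                       / (Gamma (real j + 1) * Gamma (real (p - j) + 1)) * x ^ j)"

definition wgt :: "real \<Rightarrow> complex \<Rightarrow> complex \<Rightarrow> real" where
  "wgt \<sigma> a z = (1 + (cmod (z - a))\<^sup>2) * exp (- \<sigma> * (cmod z)\<^sup>2)"

text \<open>inner product <f,g> = int_C f(z) conj(g(z)) omega(z) dA(z), with dA = d^2z / pi\<close>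
definition ip :: "real \<Rightarrow> complex \<Rightarrow> (complex \<Rightarrow> complex) \<Rightarrow> (complex \<Rightarrow> complex) \<Rightarrow> complex" where
  "ip \<sigma> a f g = (LINT z|lborel. f z * cnj (g z) * complex_of_real (wgt \<sigma> a z)) / complex_of_real pi"

definition OP :: "real \<Rightarrow> complex \<Rightarrow> nat \<Rightarrow> complex poly" where
  "OP \<sigma> a k = (\<Sum>j\<le>k. monom (a ^ (k - j) *
      complex_of_real (Fps j \<sigma> (\<sigma> * (cmod a)\<^sup>2) / Fps k \<sigma> (\<sigma> * (cmod a)\<^sup>2))) j)"

end

theory Submission
  imports Defs "HOL-Probability.Distributions"
begin


lemma Gamma_succ: "(z::real) > 0 \<Longrightarrow> Gamma (z + 1) = z * Gamma z"
  by (rule Gamma_plus1) (auto dest: nonpos_Ints_nonpos)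

definition TT :: "real \<Rightarrow> nat \<Rightarrow> nat \<Rightarrow> real" where
  "TT s p j = (if j \<le> p then Gamma (real (p - j) + s + 1) / (fact j * fact (p - j)) else 0)"

lemma Gamma_nat1: "Gamma (real j + 1) = fact j"
  using Gamma_fact[of j, where 'a=real] by (simp add: add.commute)

lemma Fps_TT: assumes "p \<le> N" shows "Fps p s x = (\<Sum>j\<le>N. TT s p j * x ^ j)"
proof -
  have "Fps p s x = (\<Sum>j\<le>p. TT s p j * x ^ j)"
    unfolding Fps_def TT_def
  proof (intro sum.cong refl)
    fix j assume "j \<in> {..p}"
    then show "Gamma (real (p - j) + s + 1) / (Gamma (real j + 1) * Gamma (real (p - j) + 1)) * x ^ j =
       (if j \<le> p then Gamma (real (p - j) + s + 1) / (fact j * fact (p - j)) else 0) * x ^ j"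
      by (simp only: Gamma_nat1 if_True atMost_iff)
  qed
  also have "\<dots> = (\<Sum>j\<le>N. TT s p j * x ^ j)"
    using assms by (intro sum.mono_neutral_left) (auto simp: TT_def)
  finally show ?thesis .
qed

lemma Fps_pos: assumes "s > 0" "x \<ge> 0" shows "Fps p s x > 0"
  unfolding Fps_def
  apply (rule sum_pos2[where i=0])
  using assms by (auto intro!: divide_pos_pos mult_pos_pos mult_nonneg_nonneg divide_nonneg_nonneg less_imp_le[OF Gamma_real_pos])

lemma TT_rec:
  assumes s: "s > 0"
  shows "real (q+2) * TT s (q+2) j - (s + real q + 2) * TT s (q+1) j
     - (case j of 0 \<Rightarrow> 0 | Suc i \<Rightarrow> TT s (q+1) i) + (case j of 0 \<Rightarrow> 0 | Suc i \<Rightarrow> TT s q i) = 0"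
proof (cases j)
  case 0
  have g: "Gamma (s + (real q + 3)) = (s + (real q + 2)) * Gamma (s + (real q + 2))"
    using Gamma_succ[of "s + (real q + 2)"] s by (simp add: add.assoc)
  have f: "(fact q :: real) > 0" by simp
  have "real (q+2) * TT s (q+2) 0 = (s + real q + 2) * TT s (q+1) 0"
    using s f unfolding TT_def by (simp add: g fact_Suc divide_simps) (simp add: g algebra_simps)
  then show ?thesis using 0 by simp
next
  case (Suc i)
  show ?thesis
  proof (cases "i \<le> q")
    case True
    then obtain n where q: "q = i + n" using le_Suc_ex by blast
    have g: "Gamma (real n + s + 2) = (real n + s + 1) * Gamma (real n + s + 1)"
      using Gamma_succ[of "real n + s + 1"] s by (simp add: add.assoc)
    have e1: "Suc (Suc (i + n)) - Suc i = Suc n" "Suc (i + n) - Suc i = n" "Suc (i+n) - i = Suc n" "i + n - i = n" by auto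
    define G0 where "G0 = Gamma (real n + s + 1)"
    have gg: "Gamma (real (Suc n) + s + 1) = (real n + s + 1) * G0"
      unfolding G0_def g[symmetric] by (simp add: add_ac)
    have t1: "TT s (q+2) (Suc i) = (real n + s + 1) * G0 / (fact (Suc i) * fact (Suc n))"
      using Suc q unfolding TT_def gg[symmetric] by (simp add: e1)
    have t2: "TT s (q+1) (Suc i) = G0 / (fact (Suc i) * fact n)"
      using Suc q by (simp add: TT_def e1 G0_def add_ac)
    have t3: "TT s (q+1) i = (real n + s + 1) * G0 / (fact i * fact (Suc n))"
      using Suc q unfolding TT_def gg[symmetric] by (simp add: e1)
    have t4: "TT s q i = G0 / (fact i * fact n)"
      using Suc q by (simp add: TT_def e1 G0_def add_ac)
    have fi: "(fact i :: real) > 0" "(fact n :: real) > 0" by simp_all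
    have "real (q+2) * ((real n + s + 1) * G0 / (fact (Suc i) * fact (Suc n))) - (s + real q + 2) * (G0 / (fact (Suc i) * fact n))
       - (real n + s + 1) * G0 / (fact i * fact (Suc n)) + G0 / (fact i * fact n) = 0"
      using s fi unfolding q by (simp add: fact_Suc divide_simps) (simp add: algebra_simps)
    then show ?thesis unfolding t1 t2 t3 t4 Suc nat.case .
  next
    case False
    show ?thesis
    proof (cases "i = q+1")
      case True
      have f: "(fact q :: real) > 0" by simp
      show ?thesis using Suc s True f by (simp add: TT_def fact_Suc divide_simps)
    next
      case False
      then show ?thesis using Suc \<open>\<not> i \<le> q\<close> by (simp add: TT_def)
    qed
  qed
qed

lemma shift_sum: "(x::'a::comm_ring_1) * (\<Sum>j\<le>N. c j * x ^ j) = (\<Sum>j\<le>Suc N. (case j of 0 \<Rightarrow> 0 | Suc i \<Rightarrow> c i) * x ^ j)"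
  by (subst sum.atMost_Suc_shift) (simp add: sum_distrib_left mult_ac)

lemma Fps_rec:
  assumes s: "s > 0"
  shows "real (q+2) * Fps (q+2) s x = (s + real q + 2 + x) * Fps (q+1) s x - x * Fps q s x"
proof -
  have e1: "Fps (q+2) s x = (\<Sum>j\<le>Suc (Suc q). TT s (q+2) j * x ^ j)" by (rule Fps_TT) simp
  have e2: "Fps (q+1) s x = (\<Sum>j\<le>Suc (Suc q). TT s (q+1) j * x ^ j)" by (rule Fps_TT) simp
  have e3: "x * Fps (q+1) s x = (\<Sum>j\<le>Suc (Suc q). (case j of 0 \<Rightarrow> 0 | Suc i \<Rightarrow> TT s (q+1) i) * x ^ j)"
  proof -
    have a: "Fps (q+1) s x = (\<Sum>j\<le>Suc q. TT s (q+1) j * x^j)" by (rule Fps_TT) simp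
    show ?thesis by (subst a, rule shift_sum)
  qed
  have e4: "x * Fps q s x = (\<Sum>j\<le>Suc (Suc q). (case j of 0 \<Rightarrow> 0 | Suc i \<Rightarrow> TT s q i) * x ^ j)"
  proof -
    have a: "Fps q s x = (\<Sum>j\<le>Suc q. TT s q j * x^j)" by (rule Fps_TT) simp
    show ?thesis by (subst a, rule shift_sum)
  qed
  have "real (q+2) * Fps (q+2) s x - (s + real q + 2) * Fps (q+1) s x - x * Fps (q+1) s x + x * Fps q s x
     = (\<Sum>j\<le>Suc (Suc q). (real (q+2) * TT s (q+2) j - (s + real q + 2) * TT s (q+1) j
     - (case j of 0 \<Rightarrow> 0 | Suc i \<Rightarrow> TT s (q+1) i) + (case j of 0 \<Rightarrow> 0 | Suc i \<Rightarrow> TT s q i)) * x ^ j)"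
    unfolding e3 e4 unfolding e1 e2
    by (simp add: sum_distrib_left sum_subtractf[symmetric] sum.distrib[symmetric] algebra_simps)
  also have "\<dots> = 0" using TT_rec[OF s] by simp
  finally show ?thesis by (simp add: algebra_simps)
qed

lemma Fps_rec0:
  assumes s: "s > 0"
  shows "Fps 1 s x = (s + 1 + x) * Fps 0 s x"
proof -
  have "Gamma (s + 2) = (s + 1) * Gamma (s + 1)" using Gamma_succ[of "s+1"] s by (simp add: add_ac)
  moreover have "Gamma (2::real) = 1" using Gamma_nat1[of 1] by simp
  ultimately show ?thesis unfolding Fps_def by (simp add: add_ac algebra_simps)
qed



lemma gauss_nd:
  assumes s: "(s::real) > 0"
  shows "exp (- s * x^2) = sqrt (pi / s) * normal_density 0 (1 / sqrt (2 * s)) x"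
proof -
  have "(1 / sqrt (2 * s))\<^sup>2 = 1 / (2 * s)" using s by (simp add: power_divide)
  then show ?thesis using s
    by (simp add: normal_density_def real_sqrt_divide real_sqrt_mult field_simps)
qed

lemma gauss_integrable_abs:
  assumes s: "(s::real) > 0"
  shows "integrable lborel (\<lambda>x. exp (- s * x^2) * \<bar>x\<bar>^k)"
proof -
  have "integrable lborel (\<lambda>x. sqrt (pi / s) * (normal_density 0 (1 / sqrt (2 * s)) x * \<bar>x - 0\<bar>^k))"
    using s by (intro integrable_mult_right integrable_normal_moment_abs) simp
  then show ?thesis unfolding gauss_nd[OF s] by (simp add: mult_ac)
qed

lemma gauss_integrable:
  assumes s: "(s::real) > 0"
  shows "integrable lborel (\<lambda>x. exp (- s * x^2) * x^k)"
proof -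
  have "integrable lborel (\<lambda>x. sqrt (pi / s) * (normal_density 0 (1 / sqrt (2 * s)) x * (x - 0)^k))"
    using s by (intro integrable_mult_right integrable_normal_moment) simp
  then show ?thesis unfolding gauss_nd[OF s] by (simp add: mult_ac)
qed

definition Gm :: "real \<Rightarrow> nat \<Rightarrow> real" where
  "Gm s n = (if even n then sqrt (pi / s) * fact n / ((4 * s) ^ (n div 2) * fact (n div 2)) else 0)"

lemma gauss_moment:
  assumes s: "(s::real) > 0"
  shows "(\<integral>x. exp (- s * x^2) * x^n \<partial>lborel) = Gm s n"
proof (cases "even n")
  case True
  then obtain k where n: "n = 2 * k" by blast
  have "(\<integral>x. normal_density 0 (1 / sqrt (2 * s)) x * (x - 0)^(2*k) \<partial>lborel)
       = fact (2 * k) / ((2 / (1 / sqrt (2 * s))\<^sup>2)^k * fact k)"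
    using s by (intro integral_normal_moment_even) simp
  moreover have "(2 / (1 / sqrt (2 * s))\<^sup>2) = 4 * s" using s by (simp add: power_divide)
  ultimately have "(\<integral>x. normal_density 0 (1 / sqrt (2 * s)) x * x^(2*k) \<partial>lborel) = fact (2 * k) / ((4 * s)^k * fact k)"
    by simp
  then show ?thesis using n
    unfolding gauss_nd[OF s] by (simp add: Gm_def mult.assoc)
next
  case False
  then obtain k where n: "n = 2 * k + 1" using oddE by blast
  have "(\<integral>x. normal_density 0 (1 / sqrt (2 * s)) x * (x - 0)^(2*k+1) \<partial>lborel) = 0"
    using s by (intro integral_normal_moment_odd) simp
  then show ?thesis using n
    unfolding gauss_nd[OF s] by (simp add: Gm_def mult.assoc)
qed

lemma Gm_rec:
  assumes s: "(s::real) > 0"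
  shows "2 * s * Gm s (Suc n) = real n * Gm s (n - 1)"
proof (cases "even n")
  case True
  then show ?thesis by (cases n) (auto simp: Gm_def)
next
  case False
  then obtain k where n: "n = 2 * k + 1" using oddE by blast
  have "Suc n = 2 * (Suc k)" using n by simp
  moreover have "(fact k :: real) > 0" "s ^ k > 0" "(4::real) ^ k > 0" using s by auto
  ultimately show ?thesis using n s
    by (simp add: Gm_def divide_simps power_mult_distrib)
qed



lemma poly_sum_N: "degree (P::complex poly) \<le> N \<Longrightarrow> poly P x = (\<Sum>n\<le>N. coeff P n * x^n)"
  unfolding poly_altdef by (intro sum.mono_neutral_left) (auto simp: coeff_eq_0)

lemma int1_poly:
  fixes P :: "complex poly"
  assumes s: "(s::real) > 0" and N: "degree P \<le> N"
  shows "integrable lborel (\<lambda>x. poly P (of_real x) * of_real (exp (- s * x^2)))"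
    and "(\<integral>x. poly P (of_real x) * of_real (exp (- s * x^2)) \<partial>lborel) = (\<Sum>n\<le>N. coeff P n * of_real (Gm s n))"
proof -
  have eq: "(\<lambda>x. poly P (of_real x) * of_real (exp (- s * x^2))) = (\<lambda>x. \<Sum>n\<le>N. coeff P n * complex_of_real (exp (- s * x^2) * x^n))"
    by (rule ext) (simp add: poly_sum_N[OF N] sum_distrib_right sum_distrib_left mult_ac)
  have i: "integrable lborel (\<lambda>x. coeff P n * complex_of_real (exp (- s * x^2) * x^n))" for n
    by (intro integrable_mult_right integrable_of_real gauss_integrable[OF s])
  show "integrable lborel (\<lambda>x. poly P (of_real x) * of_real (exp (- s * x^2)))"
    unfolding eq apply (rule Bochner_Integration.integrable_sum) by (rule i)
  show "(\<integral>x. poly P (of_real x) * of_real (exp (- s * x^2)) \<partial>lborel) = (\<Sum>n\<le>N. coeff P n * of_real (Gm s n))"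
    unfolding eq
    apply (subst Bochner_Integration.integral_sum, rule i)
    apply (simp only: integral_mult_right_zero integral_complex_of_real gauss_moment[OF s])
    done
qed

lemma ibp1:
  fixes P :: "complex poly"
  assumes s: "(s::real) > 0"
  shows "(\<integral>x. (poly (pderiv P) (of_real x) - of_real (2 * s * x) * poly P (of_real x)) * of_real (exp (- s * x^2)) \<partial>lborel) = 0"
proof -
  define N where "N = degree P"
  define c where "c = coeff P"
  define G where "G = (\<lambda>n. complex_of_real (Gm s n))"
  have d1: "degree (pderiv P) \<le> N" unfolding N_def by (simp add: degree_pderiv)
  have d2: "degree (pCons 0 P) \<le> Suc N" unfolding N_def by (simp add: degree_pCons_le)
  have cN: "c (Suc N) = 0" unfolding c_def N_def by (simp add: coeff_eq_0)
  have eqf: "(\<lambda>x. (poly (pderiv P) (of_real x) - of_real (2 * s * x) * poly P (of_real x)) * of_real (exp (- s * x^2)))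
     = (\<lambda>x. poly (pderiv P) (of_real x) * of_real (exp (- s * x^2)) - of_real (2 * s) * (poly (pCons 0 P) (of_real x) * of_real (exp (- s * x^2))))"
    by (rule ext) (simp add: algebra_simps)
  have I1: "(\<integral>x. poly (pderiv P) (of_real x) * of_real (exp (- s * x^2)) \<partial>lborel) = (\<Sum>n\<le>N. of_nat (Suc n) * c (Suc n) * G n)"
    using int1_poly(2)[OF s d1] by (simp add: coeff_pderiv c_def G_def)
  have I2: "(\<integral>x. poly (pCons 0 P) (of_real x) * of_real (exp (- s * x^2)) \<partial>lborel) = (\<Sum>n\<le>N. c n * G (Suc n))"
    using int1_poly(2)[OF s d2] unfolding sum.atMost_Suc_shift by (simp add: c_def G_def)
  have rec: "of_real (2 * s) * G (Suc n) = of_nat n * G (n - 1)" for n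
    unfolding G_def using Gm_rec[OF s, of n] by (metis of_real_mult of_real_of_nat_eq)
  have "of_real (2 * s) * (\<Sum>n\<le>N. c n * G (Suc n)) = (\<Sum>n\<le>N. c n * (of_real (2 * s) * G (Suc n)))"
    by (simp add: sum_distrib_left mult_ac)
  also have "\<dots> = (\<Sum>n\<le>N. c n * (of_nat n * G (n - 1)))" unfolding rec ..
  also have "\<dots> = (\<Sum>n\<le>Suc N. c n * (of_nat n * G (n - 1)))" using cN by simp
  also have "\<dots> = (\<Sum>n\<le>N. of_nat (Suc n) * c (Suc n) * G n)"
    by (subst sum.atMost_Suc_shift) (simp add: mult_ac)
  finally have key: "of_real (2 * s) * (\<Sum>n\<le>N. c n * G (Suc n)) = (\<Sum>n\<le>N. of_nat (Suc n) * c (Suc n) * G n)" .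
  have "(\<integral>x. poly (pderiv P) (of_real x) * of_real (exp (- s * x^2)) - of_real (2 * s) * (poly (pCons 0 P) (of_real x) * of_real (exp (- s * x^2))) \<partial>lborel)
     = (\<integral>x. poly (pderiv P) (of_real x) * of_real (exp (- s * x^2)) \<partial>lborel) - of_real (2 * s) * (\<integral>x. poly (pCons 0 P) (of_real x) * of_real (exp (- s * x^2)) \<partial>lborel)"
    by (simp only: Bochner_Integration.integral_diff[OF int1_poly(1)[OF s d1] integrable_mult_right[OF int1_poly(1)[OF s d2]]] integral_mult_right_zero)
  then show ?thesis unfolding eqf I1 I2 key by simp
qed



definition cpx :: "real \<times> real \<Rightarrow> complex" where "cpx p = Complex (fst p) (snd p)"

lemma cpx_eq: "cpx = (\<lambda>p. complex_of_real (fst p) + \<i> * complex_of_real (snd p))"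
  by (rule ext) (simp add: cpx_def Complex_eq)

lemma cpx_measurable[measurable]: "cpx \<in> borel_measurable (lborel \<Otimes>\<^sub>M lborel)"
  unfolding cpx_eq by measurable

lemma lborel_complex: "(lborel :: complex measure) = distr (lborel \<Otimes>\<^sub>M lborel) borel cpx"
proof (rule lborel_eqI)
  fix l u :: complex
  assume le: "\<And>b. b \<in> Basis \<Longrightarrow> l \<bullet> b \<le> u \<bullet> b"
  have le1: "Re l \<le> Re u" "Im l \<le> Im u" using le[of 1] le[of \<i>] by auto
  have pre: "cpx -` box l u \<inter> space (lborel \<Otimes>\<^sub>M lborel) = box (Re l) (Re u) \<times> box (Im l) (Im u)"
    by (auto simp: cpx_def box_def Basis_complex_def space_pair_measure)
  have "emeasure (distr (lborel \<Otimes>\<^sub>M lborel) borel cpx) (box l u) = emeasure (lborel \<Otimes>\<^sub>M lborel) (box (Re l) (Re u) \<times> box (Im l) (Im u))"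
    by (subst emeasure_distr) (auto simp: pre)
  also have "\<dots> = ennreal ((Re u - Re l) * (Im u - Im l))"
    using le1 by (simp add: lborel.emeasure_pair_measure_Times ennreal_mult)
  also have "(Re u - Re l) * (Im u - Im l) = (\<Prod>b\<in>Basis. (u - l) \<bullet> b)"
    by (simp add: Basis_complex_def)
  finally show "emeasure (distr (lborel \<Otimes>\<^sub>M lborel) borel cpx) (box l u) = (\<Prod>b\<in>Basis. (u - l) \<bullet> b)" .
qed simp



definition Bf :: "real \<Rightarrow> nat \<Rightarrow> real \<Rightarrow> real" where
  "Bf s N t = (1 + \<bar>t\<bar>) ^ N * exp (- s * t^2)"

lemma Bf_nonneg: "Bf s N t \<ge> 0" unfolding Bf_def by simp

lemma Bf_measurable[measurable]: "Bf s N \<in> borel_measurable borel"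
  unfolding Bf_def[abs_def] by measurable

lemma Bf_integrable:
  assumes s: "(s::real) > 0"
  shows "integrable lborel (Bf s N)"
proof -
  have eq: "Bf s N = (\<lambda>t. \<Sum>k\<le>N. real (N choose k) * (exp (- s * t^2) * \<bar>t\<bar>^k))"
  proof (rule ext)
    fix t :: real
    have "(1 + \<bar>t\<bar>)^N = (\<Sum>k\<le>N. real (N choose k) * \<bar>t\<bar>^k)"
      using binomial_ring[of "\<bar>t\<bar>" 1 N] by (simp add: add.commute)
    then show "Bf s N t = (\<Sum>k\<le>N. real (N choose k) * (exp (- s * t^2) * \<bar>t\<bar>^k))"
      by (simp add: Bf_def sum_distrib_right sum_distrib_left mult_ac)
  qed
  show ?thesis unfolding eq
    by (intro Bochner_Integration.integrable_sum integrable_mult_right gauss_integrable_abs[OF s])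
qed

lemma prod_integrable:
  assumes s: "(s::real) > 0"
  shows "integrable (lborel \<Otimes>\<^sub>M lborel) (\<lambda>p. Bf s N (fst p) * Bf s N (snd p))"
proof (rule lborel_pair.Fubini_integrable)
  show "(\<lambda>p. Bf s N (fst p) * Bf s N (snd p)) \<in> borel_measurable (lborel \<Otimes>\<^sub>M lborel)" by measurable
  have "(\<lambda>x. \<integral>y. norm (Bf s N (fst (x, y)) * Bf s N (snd (x, y))) \<partial>lborel) = (\<lambda>x. Bf s N x * (\<integral>y. Bf s N y \<partial>lborel))"
    by (rule ext) (simp add: Bf_nonneg abs_mult)
  then show "integrable lborel (\<lambda>x. \<integral>y. norm (Bf s N (fst (x, y)) * Bf s N (snd (x, y))) \<partial>lborel)"
    using Bf_integrable[OF s] by simp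
  show "AE x in lborel. integrable lborel (\<lambda>y. Bf s N (fst (x, y)) * Bf s N (snd (x, y)))"
    using Bf_integrable[OF s] by simp
qed

lemma intC:
  fixes f :: "complex \<Rightarrow> complex"
  assumes s: "(s::real) > 0" and f[measurable]: "f \<in> borel_measurable borel"
    and bd: "\<And>z. norm (f z) \<le> C * (1 + cmod z) ^ N"
  shows "integrable lborel (\<lambda>z. f z * of_real (exp (- s * (cmod z)^2)))"
proof -
  have "integrable (lborel \<Otimes>\<^sub>M lborel) (\<lambda>p. f (cpx p) * of_real (exp (- s * (cmod (cpx p))^2)))"
  proof (rule Bochner_Integration.integrable_bound)
    show "integrable (lborel \<Otimes>\<^sub>M lborel) (\<lambda>p. C * (Bf s N (fst p) * Bf s N (snd p)))"
      using prod_integrable[OF s] by simp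
    show "(\<lambda>p. f (cpx p) * of_real (exp (- s * (cmod (cpx p))^2))) \<in> borel_measurable (lborel \<Otimes>\<^sub>M lborel)"
      by measurable
    show "AE p in lborel \<Otimes>\<^sub>M lborel. norm (f (cpx p) * of_real (exp (- s * (cmod (cpx p))^2))) \<le> norm (C * (Bf s N (fst p) * Bf s N (snd p)))"
    proof (rule AE_I2)
      fix p :: "real \<times> real"
      obtain x y where p: "p = (x, y)" by (cases p)
      have c1: "cmod (cpx p) \<le> \<bar>x\<bar> + \<bar>y\<bar>" using cmod_le[of "cpx p"] by (simp add: p cpx_def)
      have c2: "(cmod (cpx p))^2 = x^2 + y^2" using cmod_power2[of "cpx p"] by (simp add: p cpx_def)
      have Cnn: "C \<ge> 0" using bd[of 0] norm_ge_zero[of "f 0"] by (simp del: norm_ge_zero)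
      have "(1+\<bar>x\<bar>)*(1+\<bar>y\<bar>) = 1 + \<bar>x\<bar> + \<bar>y\<bar> + \<bar>x\<bar>*\<bar>y\<bar>" by (simp add: algebra_simps)
      moreover have "\<bar>x\<bar>*\<bar>y\<bar> \<ge> 0" by simp
      ultimately have "1 + cmod (cpx p) \<le> (1+\<bar>x\<bar>)*(1+\<bar>y\<bar>)" using c1 by linarith
      then have "(1 + cmod (cpx p)) ^ N \<le> ((1 + \<bar>x\<bar>) * (1 + \<bar>y\<bar>)) ^ N"
        by (intro power_mono) auto
      then have "C * (1 + cmod (cpx p)) ^ N \<le> C * ((1 + \<bar>x\<bar>) * (1 + \<bar>y\<bar>)) ^ N"
        using Cnn by (rule mult_left_mono)
      then have fb: "norm (f (cpx p)) \<le> C * ((1 + \<bar>x\<bar>) * (1 + \<bar>y\<bar>)) ^ N"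
        using bd[of "cpx p"] by linarith
      have ee: "exp (- s * (cmod (cpx p))^2) = exp (- s * x^2) * exp (- s * y^2)"
        unfolding c2 exp_add[symmetric] by (simp add: algebra_simps)
      have "norm (f (cpx p) * of_real (exp (- s * (cmod (cpx p))^2))) = norm (f (cpx p)) * (exp (- s * x^2) * exp (- s * y^2))"
        unfolding ee by (simp add: norm_mult)
      also have "\<dots> \<le> C * ((1 + \<bar>x\<bar>) * (1 + \<bar>y\<bar>)) ^ N * (exp (- s * x^2) * exp (- s * y^2))"
        by (rule mult_right_mono) (rule fb, simp)
      also have "\<dots> = norm (C * (Bf s N (fst p) * Bf s N (snd p)))"
        using Cnn by (simp add: p Bf_def abs_mult power_mult_distrib)
      finally show "norm (f (cpx p) * of_real (exp (- s * (cmod (cpx p))^2))) \<le> norm (C * (Bf s N (fst p) * Bf s N (snd p)))" .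
    qed
  qed
  then show ?thesis
    by (subst lborel_complex, subst integrable_distr_eq) auto
qed



definition ew :: "real \<Rightarrow> complex \<Rightarrow> real" where "ew s z = exp (- s * (cmod z)^2)"

lemma ew_measurable[measurable]: "ew s \<in> borel_measurable borel"
  unfolding ew_def[abs_def] by measurable

lemma cnj_measurable[measurable]: "cnj \<in> borel_measurable borel"
  by (intro borel_measurable_continuous_onI continuous_on_cnj continuous_on_id)

lemma intP:
  assumes s: "(s::real) > 0"
  shows "integrable lborel (\<lambda>z. (of_real (Re z) ^ u * of_real (Im z) ^ v * z ^ a * cnj z ^ b) * of_real (ew s z))"
  unfolding ew_def
proof (rule intC[OF s, where C=1 and N="u+v+a+b"])
  show "(\<lambda>z. of_real (Re z) ^ u * of_real (Im z) ^ v * z ^ a * cnj z ^ b) \<in> borel_measurable borel"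
    by measurable
  fix z :: complex
  have "norm (of_real (Re z) ^ u * of_real (Im z) ^ v * z ^ a * cnj z ^ b) = \<bar>Re z\<bar>^u * \<bar>Im z\<bar>^v * cmod z ^ a * cmod z ^ b"
    by (simp add: norm_mult norm_power)
  also have "\<dots> \<le> (1 + cmod z)^u * (1 + cmod z)^v * (1 + cmod z)^a * (1 + cmod z)^b"
    by (intro mult_mono power_mono) (auto simp: abs_Re_le_cmod abs_Im_le_cmod intro: order_trans[OF abs_Re_le_cmod] order_trans[OF abs_Im_le_cmod])
  also have "\<dots> = 1 * (1 + cmod z) ^ (u + v + a + b)" by (simp add: power_add)
  finally show "norm (of_real (Re z) ^ u * of_real (Im z) ^ v * z ^ a * cnj z ^ b) \<le> 1 * (1 + cmod z) ^ (u + v + a + b)" .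
qed

lemma intM:
  assumes s: "(s::real) > 0"
  shows "integrable lborel (\<lambda>z. (z ^ a * cnj z ^ b) * of_real (ew s z))"
  using intP[OF s, of 0 0 a b] by simp

lemma intRe:
  assumes s: "(s::real) > 0"
  shows "integrable lborel (\<lambda>z. (of_real (Re z) * (z ^ a * cnj z ^ b)) * of_real (ew s z))"
  using intP[OF s, of 1 0 a b] by (simp add: mult_ac)

lemma intIm:
  assumes s: "(s::real) > 0"
  shows "integrable lborel (\<lambda>z. (of_real (Im z) * (z ^ a * cnj z ^ b)) * of_real (ew s z))"
  using intP[OF s, of 0 1 a b] by (simp add: mult_ac)

lemma fubini_yx:
  fixes g :: "complex \<Rightarrow> complex"
  assumes [measurable]: "g \<in> borel_measurable borel" and i: "integrable lborel g"
  shows "integral\<^sup>L lborel g = (\<integral>y. (\<integral>x. g (Complex x y) \<partial>lborel) \<partial>lborel)"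
    and "integral\<^sup>L lborel g = (\<integral>x. (\<integral>y. g (Complex x y) \<partial>lborel) \<partial>lborel)"
proof -
  have i2: "integrable (lborel \<Otimes>\<^sub>M lborel) (\<lambda>(x, y). g (Complex x y))"
    using i by (subst (asm) lborel_complex, subst (asm) integrable_distr_eq) (auto simp: cpx_def split_beta')
  have e: "integral\<^sup>L lborel g = integral\<^sup>L (lborel \<Otimes>\<^sub>M lborel) (\<lambda>(x, y). g (Complex x y))"
    by (subst lborel_complex, subst integral_distr) (auto simp: cpx_def split_beta')
  show "integral\<^sup>L lborel g = (\<integral>y. (\<integral>x. g (Complex x y) \<partial>lborel) \<partial>lborel)"
    unfolding e by (rule lborel_pair.integral_snd[OF i2, symmetric])
  show "integral\<^sup>L lborel g = (\<integral>x. (\<integral>y. g (Complex x y) \<partial>lborel) \<partial>lborel)"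
    unfolding e by (rule lborel_pair.integral_fst[OF i2, symmetric])
qed



lemma ew_Complex: "ew s (Complex x y) = exp (- s * x^2) * exp (- s * y^2)"
  unfolding ew_def cmod_power2 by (simp add: exp_add[symmetric] algebra_simps)

lemma Complex_eq': "Complex x y = of_real x + \<i> * of_real y" by (simp add: Complex_eq)
lemma cnj_Complex': "cnj (Complex x y) = of_real x - \<i> * of_real y" by (simp add: Complex_eq)

lemma pderiv_lin: "pderiv [:c, d:] = [:d:]" by (simp add: pderiv_pCons)

definition gA :: "real \<Rightarrow> nat \<Rightarrow> nat \<Rightarrow> complex \<Rightarrow> complex" where
  "gA s j m z = (of_nat j * (z^(j-1) * cnj z^m) + of_nat m * (z^j * cnj z^(m-1))
      - of_real (2 * s) * (of_real (Re z) * (z^j * cnj z^m))) * of_real (ew s z)"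

definition gB :: "real \<Rightarrow> nat \<Rightarrow> nat \<Rightarrow> complex \<Rightarrow> complex" where
  "gB s j m z = (\<i> * of_nat j * (z^(j-1) * cnj z^m) - \<i> * of_nat m * (z^j * cnj z^(m-1))
      - of_real (2 * s) * (of_real (Im z) * (z^j * cnj z^m))) * of_real (ew s z)"

lemma gA_measurable[measurable]: "gA s j m \<in> borel_measurable borel"
  unfolding gA_def[abs_def] by measurable

lemma gB_measurable[measurable]: "gB s j m \<in> borel_measurable borel"
  unfolding gB_def[abs_def] by measurable

lemma gA_integrable: assumes s: "s > 0" shows "integrable lborel (gA s j m)"
proof -
  have "gA s j m = (\<lambda>z. of_nat j * ((z^(j-1) * cnj z^m) * of_real (ew s z)) + of_nat m * ((z^j * cnj z^(m-1)) * of_real (ew s z))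
      - of_real (2 * s) * ((of_real (Re z) * (z^j * cnj z^m)) * of_real (ew s z)))"
    by (rule ext) (simp add: gA_def algebra_simps)
  then show ?thesis
    by (simp only:) (intro Bochner_Integration.integrable_diff Bochner_Integration.integrable_add
        integrable_mult_right intM[OF s] intRe[OF s])
qed

lemma gB_integrable: assumes s: "s > 0" shows "integrable lborel (gB s j m)"
proof -
  have "gB s j m = (\<lambda>z. (\<i> * of_nat j) * ((z^(j-1) * cnj z^m) * of_real (ew s z)) - (\<i> * of_nat m) * ((z^j * cnj z^(m-1)) * of_real (ew s z))
      - of_real (2 * s) * ((of_real (Im z) * (z^j * cnj z^m)) * of_real (ew s z)))"
    by (rule ext) (simp add: gB_def algebra_simps)
  then show ?thesis
    by (simp only:) (intro Bochner_Integration.integrable_diff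
        integrable_mult_right intM[OF s] intIm[OF s])
qed

lemma gA_zero: assumes s: "s > 0" shows "integral\<^sup>L lborel (gA s j m) = 0"
proof -
  have "(\<integral>x. gA s j m (Complex x y) \<partial>lborel) = 0" for y
  proof -
    define P where "P = [:\<i> * of_real y, 1:] ^ j * [:- \<i> * of_real y, 1:] ^ m"
    have "(\<lambda>x. gA s j m (Complex x y)) = (\<lambda>x. ((poly (pderiv P) (of_real x) - of_real (2 * s * x) * poly P (of_real x)) * of_real (exp (- s * x^2))) * of_real (exp (- s * y^2)))"
      apply (rule ext) apply (simp only: gA_def ew_Complex)
      by (simp add: P_def pderiv_mult pderiv_power pderiv_lin Complex_eq' cnj_Complex' algebra_simps)
    then show ?thesis using ibp1[OF s, of P] by simp
  qed
  then show ?thesis using fubini_yx(1)[OF gA_measurable gA_integrable[OF s]] by simp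
qed

lemma gB_zero: assumes s: "s > 0" shows "integral\<^sup>L lborel (gB s j m) = 0"
proof -
  have "(\<integral>y. gB s j m (Complex x y) \<partial>lborel) = 0" for x
  proof -
    define P where "P = [:of_real x, \<i>:] ^ j * [:of_real x, - \<i>:] ^ m"
    have "(\<lambda>y. gB s j m (Complex x y)) = (\<lambda>y. ((poly (pderiv P) (of_real y) - of_real (2 * s * y) * poly P (of_real y)) * of_real (exp (- s * y^2))) * of_real (exp (- s * x^2)))"
      apply (rule ext) apply (simp only: gB_def ew_Complex)
      by (simp add: P_def pderiv_mult pderiv_power pderiv_lin Complex_eq' cnj_Complex' algebra_simps)
    then show ?thesis using ibp1[OF s, of P] by simp
  qed
  then show ?thesis using fubini_yx(2)[OF gB_measurable gB_integrable[OF s]] by simp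
qed



definition J :: "real \<Rightarrow> nat \<Rightarrow> nat \<Rightarrow> complex" where
  "J s a b = (\<integral>z. (z ^ a * cnj z ^ b) * of_real (ew s z) \<partial>lborel)"

lemma J_rec:
  assumes s: "s > 0"
  shows "of_real s * J s (Suc j) m = of_nat m * J s j (m - 1)"
proof -
  have pt: "gA s j m z + \<i> * gB s j m z = 2 * (of_nat m * ((z^j * cnj z^(m-1)) * of_real (ew s z)) - of_real s * ((z^(Suc j) * cnj z^m) * of_real (ew s z)))" for z
  proof -
    define W where "W = z^j * cnj z^m"
    have z: "of_real (Re z) + \<i> * of_real (Im z) = z" by (simp add: complex_eq_iff)
    have "gA s j m z + \<i> * gB s j m z = (2 * of_nat m * (z^j * cnj z^(m-1)) - 2 * of_real s * ((of_real (Re z) + \<i> * of_real (Im z)) * W)) * of_real (ew s z)"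
      unfolding gA_def gB_def W_def by (simp add: algebra_simps)
    also have "\<dots> = 2 * (of_nat m * ((z^j * cnj z^(m-1)) * of_real (ew s z)) - of_real s * ((z^(Suc j) * cnj z^m) * of_real (ew s z)))"
      unfolding z W_def by (simp add: algebra_simps)
    finally show ?thesis .
  qed
  have "0 = integral\<^sup>L lborel (gA s j m) + \<i> * integral\<^sup>L lborel (gB s j m)"
    by (simp add: gA_zero[OF s] gB_zero[OF s])
  also have "\<dots> = (\<integral>z. gA s j m z + \<i> * gB s j m z \<partial>lborel)"
    using gA_integrable[OF s] gB_integrable[OF s] by simp
  also have "\<dots> = (\<integral>z. 2 * (of_nat m * ((z^j * cnj z^(m-1)) * of_real (ew s z)) - of_real s * ((z^(Suc j) * cnj z^m) * of_real (ew s z))) \<partial>lborel)"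
    unfolding pt ..
  also have "\<dots> = 2 * (of_nat m * J s j (m - 1) - of_real s * J s (Suc j) m)"
    by (simp only: integral_mult_right_zero Bochner_Integration.integral_diff[OF integrable_mult_right[OF intM[OF s]] integrable_mult_right[OF intM[OF s]]] J_def)
  finally show ?thesis by simp
qed

lemma J_cnj:
  assumes s: "s > 0"
  shows "J s b a = cnj (J s a b)"
proof -
  have "J s b a = (\<integral>z. cnj ((z ^ a * cnj z ^ b) * of_real (ew s z)) \<partial>lborel)"
    unfolding J_def by (simp add: mult_ac)
  also have "\<dots> = cnj (J s a b)" unfolding J_def by (rule Bochner_Integration.integral_cnj)
  finally show ?thesis .
qed

lemma J_00:
  assumes s: "s > 0"
  shows "J s 0 0 = of_real (pi / s)"
proof -
  have m: "(\<lambda>z. complex_of_real (ew s z)) \<in> borel_measurable borel" by measurable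
  have i: "integrable lborel (\<lambda>z. complex_of_real (ew s z))" using intM[OF s, of 0 0] by simp
  have g0: "(\<integral>x. exp (- s * x^2) \<partial>lborel) = sqrt (pi / s)"
    using gauss_moment[OF s, of 0] by (simp add: Gm_def)
  have "J s 0 0 = (\<integral>y. (\<integral>x. complex_of_real (ew s (Complex x y)) \<partial>lborel) \<partial>lborel)"
    unfolding J_def using fubini_yx(1)[OF m i] by simp
  also have "\<dots> = (\<integral>y. of_real (sqrt (pi / s) * exp (- s * y^2)) \<partial>lborel)"
    unfolding ew_Complex by (simp only: integral_complex_of_real integral_mult_left_zero g0)
  also have "\<dots> = of_real (sqrt (pi / s) * sqrt (pi / s))"
    by (simp only: integral_complex_of_real integral_mult_right_zero g0)
  also have "\<dots> = of_real (pi / s)" using s by simp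
  finally show ?thesis .
qed

lemma J_val:
  assumes s: "s > 0"
  shows "J s j m = (if j = m then of_real (pi * fact j / s ^ (j + 1)) else 0)"
proof (induction j arbitrary: m)
  case 0
  show ?case
  proof (cases m)
    case 0 then show ?thesis using J_00[OF s] by simp
  next
    case (Suc k)
    have "of_real s * J s (Suc k) 0 = 0" using J_rec[OF s, of k 0] by simp
    then have "J s (Suc k) 0 = 0" using s by simp
    then show ?thesis using J_cnj[OF s, of 0 "Suc k"] Suc by simp
  qed
next
  case (Suc j)
  show ?case
  proof (cases m)
    case 0 
    have "of_real s * J s (Suc j) 0 = 0" using J_rec[OF s, of j 0] by simp
    then show ?thesis using s 0 by simp
  next
    case (Suc k)
    have "of_real s * J s (Suc j) m = of_nat m * J s j k" using J_rec[OF s, of j m] Suc by simp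
    then have "J s (Suc j) m = of_nat m * J s j k / of_real s" using s by (simp add: field_simps)
    then show ?thesis using Suc.IH[of k] \<open>m = Suc k\<close> s
      by (auto simp: field_simps)
  qed
qed



definition fF :: "real \<Rightarrow> complex \<Rightarrow> nat \<Rightarrow> real" where
  "fF s a j = Fps j s (s * (cmod a)^2)"

definition cc :: "real \<Rightarrow> complex \<Rightarrow> nat \<Rightarrow> nat \<Rightarrow> complex" where
  "cc s a k j = a ^ (k - j) * complex_of_real (fF s a j / fF s a k)"

lemma fF_pos: "s > 0 \<Longrightarrow> fF s a j > 0"
  unfolding fF_def by (rule Fps_pos) auto

lemma OP_cc: "OP s a k = (\<Sum>j\<le>k. monom (cc s a k j) j)"
  unfolding OP_def cc_def fF_def ..

lemma poly_OP: "poly (OP s a k) z = (\<Sum>j\<le>k. cc s a k j * z ^ j)"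
  unfolding OP_cc poly_sum by (simp add: poly_monom)

lemma coeff_OP: "coeff (OP s a k) n = (if n \<le> k then cc s a k n else 0)"
  unfolding OP_cc coeff_sum by (simp add: coeff_monom)

lemma cc_kk: "s > 0 \<Longrightarrow> cc s a k k = 1"
  unfolding cc_def using fF_pos[of s a k] by simp

lemma degree_OP: assumes "s > 0" shows "degree (OP s a k) = k" and "lead_coeff (OP s a k) = 1"
proof -
  have "degree (OP s a k) \<le> k" unfolding OP_cc
    by (intro degree_sum_le) (auto intro: order_trans[OF degree_monom_le])
  moreover have "coeff (OP s a k) k \<noteq> 0" using cc_kk[OF assms] by (simp add: coeff_OP)
  ultimately show d: "degree (OP s a k) = k" by (simp add: le_antisym le_degree)
  show "lead_coeff (OP s a k) = 1" unfolding d coeff_OP using cc_kk[OF assms] by simp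
qed

lemma OP_recurrence:
  assumes s: "s > 0" and k: "k \<ge> 1"
  shows "z * poly (OP s a k) z =
          poly (OP s a (k + 1)) z
          + (- a * complex_of_real (Fps k s (s * (cmod a)\<^sup>2) / Fps (k + 1) s (s * (cmod a)\<^sup>2)))
              * poly (OP s a k) z
          + z * (a * complex_of_real (Fps (k - 1) s (s * (cmod a)\<^sup>2) / Fps k s (s * (cmod a)\<^sup>2)))
              * poly (OP s a (k - 1)) z"
proof -
  obtain k' where kk: "k = Suc k'" using k by (cases k) auto
  define b where "b = - a * complex_of_real (fF s a k / fF s a (k + 1))"
  define c where "c = a * complex_of_real (fF s a (k - 1) / fF s a k)"
  have fpos: "\<And>j. fF s a j > 0" using fF_pos[OF s] by blast
  have i: "cc s a (k+1) j + b * cc s a k j = 0" if "j \<le> k" for j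
  proof -
    have "Suc k - j = Suc (k - j)" using that by simp
    then show ?thesis unfolding b_def cc_def using fpos[of k] fpos[of "k+1"]
      by (simp add: field_simps)
  qed
  have ii: "c * cc s a k' j = cc s a k j" if "j \<le> k'" for j
  proof -
    have "k - j = Suc (k' - j)" using that kk by simp
    then show ?thesis unfolding c_def cc_def using fpos[of k] fpos[of "k-1"] kk
      by (simp add: field_simps)
  qed
  have "poly (OP s a (k + 1)) z + b * poly (OP s a k) z
       = (\<Sum>j\<le>k. (cc s a (k+1) j + b * cc s a k j) * z ^ j) + cc s a (k+1) (k+1) * z ^ (k+1)"
    unfolding poly_OP by (simp add: sum_distrib_left distrib_right distrib_left sum.distrib mult_ac)
  also have "\<dots> = z ^ (k+1)" using i cc_kk[OF s] by simp
  finally have A: "poly (OP s a (k + 1)) z + b * poly (OP s a k) z = z ^ (k+1)" .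
  have B: "z * c * poly (OP s a (k - 1)) z = (\<Sum>j\<le>k'. cc s a k j * z ^ Suc j)"
  proof -
    have "z * c * poly (OP s a (k - 1)) z = (\<Sum>j\<le>k'. z ^ Suc j * (c * cc s a k' j))"
      unfolding poly_OP kk diff_Suc_1 by (simp add: sum_distrib_left mult_ac)
    also have "\<dots> = (\<Sum>j\<le>k'. cc s a k j * z ^ Suc j)"
      by (intro sum.cong refl) (simp add: ii)
    finally show ?thesis .
  qed
  have C: "z * poly (OP s a k) z = (\<Sum>j\<le>k'. cc s a k j * z ^ Suc j) + z ^ (k+1)"
    unfolding poly_OP using kk cc_kk[OF s] by (simp add: sum_distrib_left distrib_left mult_ac)
  have "z * poly (OP s a k) z = poly (OP s a (k + 1)) z + b * poly (OP s a k) z + z * c * poly (OP s a (k - 1)) z"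
    using A B C by simp
  then show ?thesis unfolding b_def c_def fF_def .
qed



definition M :: "real \<Rightarrow> complex \<Rightarrow> nat \<Rightarrow> nat \<Rightarrow> complex" where
  "M s a j m = (\<integral>z. (z ^ j * cnj z ^ m) * of_real (wgt s a z) \<partial>lborel)"

definition PP :: "real \<Rightarrow> nat \<Rightarrow> complex" where
  "PP s n = of_real (pi * fact n / s ^ (n + 1))"

lemma wgt_ew: "wgt s a z = (1 + (cmod (z - a))^2) * ew s z"
  unfolding wgt_def ew_def ..

lemma wgt_expand:
  "(z ^ j * cnj z ^ m) * of_real (wgt s a z) =
     (1 + a * cnj a) * ((z ^ j * cnj z ^ m) * of_real (ew s z))
   - cnj a * ((z ^ Suc j * cnj z ^ m) * of_real (ew s z))
   - a * ((z ^ j * cnj z ^ Suc m) * of_real (ew s z))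
   + (z ^ Suc j * cnj z ^ Suc m) * of_real (ew s z)"
proof -
  have eq: "complex_of_real (wgt s a z) = (1 + (z - a) * cnj (z - a)) * of_real (ew s z)"
    unfolding wgt_ew of_real_mult of_real_add complex_norm_square by simp
  show ?thesis by (subst eq) (simp add: algebra_simps)
qed

lemma wgt_integrable:
  assumes s: "s > 0"
  shows "integrable lborel (\<lambda>z. (z ^ j * cnj z ^ m) * of_real (wgt s a z))"
  unfolding wgt_expand
  by (intro Bochner_Integration.integrable_diff Bochner_Integration.integrable_add
        integrable_mult_right intM[OF s])

lemma M_J:
  assumes s: "s > 0"
  shows "M s a j m = (1 + a * cnj a) * J s j m - cnj a * J s (Suc j) m - a * J s j (Suc m) + J s (Suc j) (Suc m)"
  unfolding M_def wgt_expand J_def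
  by (simp only: Bochner_Integration.integral_add Bochner_Integration.integral_diff integral_mult_right_zero
      intM[OF s] integrable_mult_right Bochner_Integration.integrable_diff)

lemma M_if:
  assumes s: "s > 0"
  shows "M s a j m = (if j = m then (1 + a * cnj a) * PP s m + PP s (Suc m) else 0)
     - (if Suc j = m then cnj a * PP s m else 0) - (if j = Suc m then a * PP s j else 0)"
  unfolding M_J[OF s] J_val[OF s] PP_def by auto

lemma M_cnj:
  assumes s: "s > 0"
  shows "M s a m j = cnj (M s a j m)"
proof -
  have "M s a m j = (\<integral>z. cnj ((z ^ j * cnj z ^ m) * of_real (wgt s a z)) \<partial>lborel)"
    unfolding M_def by (simp add: mult_ac)
  also have "\<dots> = cnj (M s a j m)" unfolding M_def by (rule Bochner_Integration.integral_cnj)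
  finally show ?thesis .
qed

definition S :: "real \<Rightarrow> complex \<Rightarrow> nat \<Rightarrow> nat \<Rightarrow> complex" where
  "S s a k m = (\<Sum>j\<le>k. cc s a k j * M s a j m)"

lemma S_form:
  assumes s: "s > 0" and mk: "m \<le> k"
  shows "S s a k m = cc s a k m * ((1 + a * cnj a) * PP s m + PP s (Suc m))
     - (case m of 0 \<Rightarrow> 0 | Suc q \<Rightarrow> cnj a * cc s a k q * PP s m)
     - (if m < k then a * cc s a k (Suc m) * PP s (Suc m) else 0)"
proof -
  have "S s a k m = (\<Sum>j\<le>k. (if j = m then cc s a k j * ((1 + a * cnj a) * PP s m + PP s (Suc m)) else 0))
     - (\<Sum>j\<le>k. (if Suc j = m then cc s a k j * (cnj a * PP s m) else 0))
     - (\<Sum>j\<le>k. (if j = Suc m then cc s a k j * (a * PP s j) else 0))"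
  proof -
    have pt: "cc s a k j * M s a j m = (if j = m then cc s a k j * ((1 + a * cnj a) * PP s m + PP s (Suc m)) else 0)
       - (if Suc j = m then cc s a k j * (cnj a * PP s m) else 0)
       - (if j = Suc m then cc s a k j * (a * PP s j) else 0)" for j
      unfolding M_if[OF s]
      by (cases "j = m"; cases "Suc j = m"; cases "j = Suc m") (simp_all add: algebra_simps)
    show ?thesis unfolding S_def pt by (simp only: sum_subtractf)
  qed
  also have "(\<Sum>j\<le>k. (if j = m then cc s a k j * ((1 + a * cnj a) * PP s m + PP s (Suc m)) else 0))
      = cc s a k m * ((1 + a * cnj a) * PP s m + PP s (Suc m))"
    using mk by (simp add: sum.delta)
  also have "(\<Sum>j\<le>k. (if Suc j = m then cc s a k j * (cnj a * PP s m) else 0))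
      = (case m of 0 \<Rightarrow> 0 | Suc q \<Rightarrow> cnj a * cc s a k q * PP s m)"
  proof (cases m)
    case 0 then show ?thesis by simp
  next
    case (Suc q)
    have "(\<Sum>j\<le>k. (if Suc j = m then cc s a k j * (cnj a * PP s m) else 0))
        = (\<Sum>j\<le>k. (if j = q then cc s a k j * (cnj a * PP s m) else 0))"
      using Suc by (intro sum.cong) auto
    then show ?thesis using Suc mk by (simp add: sum.delta mult_ac)
  qed
  also have "(\<Sum>j\<le>k. (if j = Suc m then cc s a k j * (a * PP s j) else 0))
      = (if m < k then a * cc s a k (Suc m) * PP s (Suc m) else 0)"
    by (simp add: sum.delta mult_ac)
  finally show ?thesis .
qed



lemma PP_Suc: assumes s: "s > 0" shows "PP s (Suc n) = PP s n * of_real ((real n + 1) / s)"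
  unfolding PP_def using s by (simp add: field_simps)

lemma acnj: "a * cnj a = complex_of_real ((cmod a)^2)"
  using complex_norm_square[of a] by simp

lemma acnj': "(complex_of_real (cmod a))^2 = a * cnj a"
  using complex_norm_square[of a] by simp

lemma S_zero:
  assumes s: "s > 0" and mk: "m < k"
  shows "S s a k m = 0"
proof -
  define f where "f = fF s a"
  define N where "N = (cmod a)^2"
  define A where "A = a ^ (k - m)"
  obtain pr where pr: "PP s m = of_real pr" unfolding PP_def by blast
  have fpos: "\<And>j. f j > 0" unfolding f_def using fF_pos[OF s] by blast
  have e1: "cc s a k m = A * of_real (f m / f k)" unfolding cc_def A_def f_def ..
  have e3: "a * cc s a k (Suc m) = A * of_real (f (Suc m) / f k)"
  proof -
    have "k - m = Suc (k - Suc m)" using mk by simp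
    then show ?thesis unfolding cc_def A_def f_def by simp
  qed
  show ?thesis
  proof (cases m)
    case 0
    have rec: "f 1 = (s + 1 + s * N) * f 0" unfolding f_def fF_def N_def using Fps_rec0[OF s] by simp
    have "S s a k m = A * of_real (f m / f k) * ((1 + of_real N) * of_real pr + of_real pr * of_real ((real m + 1) / s))
        - A * of_real (f (Suc m) / f k) * (of_real pr * of_real ((real m + 1) / s))"
      unfolding S_form[OF s less_imp_le[OF mk]] using mk 0
      by (simp add: e1[unfolded 0] mult.assoc[symmetric] e3[unfolded 0] PP_Suc[OF s] pr[unfolded 0] acnj N_def del: of_real_power)
    also have "\<dots> = A * of_real (f m / f k * ((1 + N) * pr + pr * ((real m + 1) / s)) - f (Suc m) / f k * (pr * ((real m + 1) / s)))"
      using fpos[of k] s by (simp add: field_simps)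
    also have "f m / f k * ((1 + N) * pr + pr * ((real m + 1) / s)) - f (Suc m) / f k * (pr * ((real m + 1) / s)) = 0"
      using 0 rec s fpos[of k] by (simp add: field_simps)
    finally show ?thesis by simp
  next
    case (Suc q)
    have rec: "real (q+2) * f (q+2) = (s + real q + 2 + s * N) * f (q+1) - s * N * f q"
      unfolding f_def fF_def N_def using Fps_rec[OF s, of q] by simp
    have e2: "cnj a * cc s a k q = of_real N * A * of_real (f q / f k)"
    proof -
      have "k - q = Suc (k - m)" using mk Suc by simp
      then show ?thesis unfolding cc_def A_def f_def N_def by (simp add: acnj' mult_ac)
    qed
    have "S s a k m = A * of_real (f m / f k) * ((1 + of_real N) * of_real pr + of_real pr * of_real ((real m + 1) / s))
        - of_real N * A * of_real (f q / f k) * of_real pr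
        - A * of_real (f (Suc m) / f k) * (of_real pr * of_real ((real m + 1) / s))"
      unfolding S_form[OF s less_imp_le[OF mk]] using mk Suc
      by (simp add: e1[unfolded Suc] mult.assoc[symmetric] e2[unfolded mult.assoc[symmetric]] e3[unfolded Suc] PP_Suc[OF s, of "Suc q"] pr[unfolded Suc] acnj N_def del: of_real_power)
    also have "\<dots> = A * of_real (f m / f k * ((1 + N) * pr + pr * ((real m + 1) / s)) - N * (f q / f k) * pr - f (Suc m) / f k * (pr * ((real m + 1) / s)))"
      using fpos[of k] s by (simp add: field_simps)
    also have "f m / f k * ((1 + N) * pr + pr * ((real m + 1) / s)) - N * (f q / f k) * pr - f (Suc m) / f k * (pr * ((real m + 1) / s)) = 0"
    proof -
      have "f m / f k * ((1 + N) * pr + pr * ((real m + 1) / s)) - N * (f q / f k) * pr - f (Suc m) / f k * (pr * ((real m + 1) / s))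
          = pr / (s * f k) * ((s + real q + 2 + s * N) * f (q+1) - s * N * f q - real (q+2) * f (q+2))"
        using Suc s fpos[of k] by (simp add: field_simps)
      also have "\<dots> = 0" using rec by simp
      finally show ?thesis .
    qed
    finally show ?thesis by simp
  qed
qed



lemma S_kk:
  assumes s: "s > 0"
  shows "S s a k k = of_real (pi * (fact (k + 1) / s ^ (k + 2) * (fF s a (k + 1) / fF s a k)))"
proof -
  define f where "f = fF s a"
  define N where "N = (cmod a)^2"
  define pr where "pr = pi * fact k / s ^ (k + 1)"
  have pr: "PP s k = of_real pr" unfolding PP_def pr_def ..
  have fpos: "\<And>j. f j > 0" unfolding f_def using fF_pos[OF s] by blast
  have tgt: "pi * (fact (k + 1) / s ^ (k + 2) * (f (k + 1) / f k)) = pr * (real k + 1) / s * (f (k + 1) / f k)"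
    unfolding pr_def using s by (simp add: field_simps)
  show ?thesis
  proof (cases k)
    case 0
    have rec: "f 1 = (s + 1 + s * N) * f 0" unfolding f_def fF_def N_def using Fps_rec0[OF s] by simp
    have "S s a k k = (1 + of_real N) * of_real pr + of_real pr * of_real ((real k + 1) / s)"
      unfolding S_form[OF s order.refl] using 0 cc_kk[OF s, of a 0]
      by (simp add: PP_Suc[OF s] pr[unfolded 0] acnj N_def del: of_real_power)
    also have "\<dots> = of_real ((1 + N) * pr + pr * ((real k + 1) / s))" by simp
    also have "(1 + N) * pr + pr * ((real k + 1) / s) = pr * (real k + 1) / s * (f (k + 1) / f k)"
      using 0 rec s fpos[of 0] by (simp add: field_simps)
    finally show ?thesis unfolding tgt[unfolded f_def] f_def .
  next
    case (Suc q)
    have rec: "real (q+2) * f (q+2) = (s + real q + 2 + s * N) * f (q+1) - s * N * f q"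
      unfolding f_def fF_def N_def using Fps_rec[OF s, of q] by simp
    have e2: "cnj a * cc s a k q = of_real N * of_real (f q / f k)"
      unfolding cc_def f_def N_def using Suc by (simp add: acnj' mult_ac)
    have "S s a k k = (1 + of_real N) * of_real pr + of_real pr * of_real ((real k + 1) / s) - of_real N * of_real (f q / f k) * of_real pr"
      unfolding S_form[OF s order.refl] using Suc cc_kk[OF s, of a k]
      by (simp add: PP_Suc[OF s, of "Suc q"] pr[unfolded Suc] e2[unfolded Suc] acnj N_def mult.assoc[symmetric] del: of_real_power)
    also have "\<dots> = of_real ((1 + N) * pr + pr * ((real k + 1) / s) - N * (f q / f k) * pr)" by simp
    also have "(1 + N) * pr + pr * ((real k + 1) / s) - N * (f q / f k) * pr = pr * (real k + 1) / s * (f (k + 1) / f k)"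
    proof -
      have "pr * (real k + 1) / s * (f (k + 1) / f k) = pr / (s * f k) * (real (q+2) * f (q+2))"
        using Suc by (simp add: field_simps)
      also have "\<dots> = pr / (s * f k) * ((s + real q + 2 + s * N) * f (q+1) - s * N * f q)" using rec by simp
      also have "\<dots> = (1 + N) * pr + pr * ((real k + 1) / s) - N * (f q / f k) * pr"
        using Suc s fpos[of k] by (simp add: field_simps)
      finally show ?thesis by simp
    qed
    finally show ?thesis unfolding tgt[unfolded f_def] f_def .
  qed
qed



lemma integrand_sum:
  "poly (OP s a k) z * cnj (poly (OP s a l) z) * complex_of_real (wgt s a z)
   = (\<Sum>j\<le>k. \<Sum>m\<le>l. (cc s a k j * cnj (cc s a l m)) * ((z ^ j * cnj z ^ m) * of_real (wgt s a z)))"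
  unfolding poly_OP apply (simp add: sum_distrib_left sum_distrib_right mult_ac) by (rule sum.swap)

lemma integrand_integrable:
  assumes s: "s > 0"
  shows "integrable lborel (\<lambda>z. poly (OP s a k) z * cnj (poly (OP s a l) z) * complex_of_real (wgt s a z))"
  unfolding integrand_sum
  by (intro Bochner_Integration.integrable_sum integrable_mult_right wgt_integrable[OF s])

lemma integral_IP:
  assumes s: "s > 0"
  shows "(\<integral>z. poly (OP s a k) z * cnj (poly (OP s a l) z) * complex_of_real (wgt s a z) \<partial>lborel)
     = (\<Sum>j\<le>k. \<Sum>m\<le>l. (cc s a k j * cnj (cc s a l m)) * M s a j m)"
  unfolding integrand_sum M_def
  by (simp only: Bochner_Integration.integral_sum integral_mult_right_zero
     Bochner_Integration.integrable_sum integrable_mult_right wgt_integrable[OF s])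

lemma IP_lt:
  assumes s: "s > 0" and lk: "l < k"
  shows "(\<Sum>j\<le>k. \<Sum>m\<le>l. (cc s a k j * cnj (cc s a l m)) * M s a j m) = 0"
proof -
  have "(\<Sum>j\<le>k. \<Sum>m\<le>l. (cc s a k j * cnj (cc s a l m)) * M s a j m) = (\<Sum>m\<le>l. cnj (cc s a l m) * S s a k m)"
    unfolding S_def by (subst sum.swap) (simp add: sum_distrib_left mult_ac)
  also have "\<dots> = 0" using S_zero[OF s] lk by (intro sum.neutral) auto
  finally show ?thesis .
qed

lemma IP_gt:
  assumes s: "s > 0" and kl: "k < l"
  shows "(\<Sum>j\<le>k. \<Sum>m\<le>l. (cc s a k j * cnj (cc s a l m)) * M s a j m) = 0"
proof -
  have "(\<Sum>j\<le>k. \<Sum>m\<le>l. (cc s a k j * cnj (cc s a l m)) * M s a j m) = (\<Sum>j\<le>k. cc s a k j * cnj (S s a l j))"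
  proof (intro sum.cong refl)
    fix j
    have mc: "cnj (M s a m j) = M s a j m" for m using M_cnj[OF s, of a j m] by simp
    show "(\<Sum>m\<le>l. cc s a k j * cnj (cc s a l m) * M s a j m) = cc s a k j * cnj (S s a l j)"
      unfolding S_def by (simp add: sum_distrib_left mc mult_ac)
  qed
  also have "\<dots> = 0" using S_zero[OF s] kl by (intro sum.neutral) auto
  finally show ?thesis .
qed

lemma IP_eq:
  assumes s: "s > 0"
  shows "(\<Sum>j\<le>k. \<Sum>m\<le>k. (cc s a k j * cnj (cc s a k m)) * M s a j m) = S s a k k"
proof -
  have "(\<Sum>j\<le>k. \<Sum>m\<le>k. (cc s a k j * cnj (cc s a k m)) * M s a j m) = (\<Sum>m\<le>k. cnj (cc s a k m) * S s a k m)"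
    unfolding S_def by (subst sum.swap) (simp add: sum_distrib_left mult_ac)
  also have "\<dots> = (\<Sum>m<k. cnj (cc s a k m) * S s a k m) + cnj (cc s a k k) * S s a k k"
    by (simp add: lessThan_Suc_atMost[symmetric])
  also have "\<dots> = cnj (cc s a k k) * S s a k k"
  proof -
    have "(\<Sum>m<k. cnj (cc s a k m) * S s a k m) = 0"
      by (intro sum.neutral) (auto simp: S_zero[OF s])
    then show ?thesis by simp
  qed
  also have "\<dots> = S s a k k" using cc_kk[OF s] by simp
  finally show ?thesis .
qed



theorem propositionA1:
  fixes a :: complex and \<sigma> :: real
  assumes "\<sigma> > 0"
  shows "(\<forall>k. degree (OP \<sigma> a k) = k \<and> lead_coeff (OP \<sigma> a k) = 1)
    \<and> (\<forall>k l. integrable lborel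
          (\<lambda>z. poly (OP \<sigma> a k) z * cnj (poly (OP \<sigma> a l) z) * complex_of_real (wgt \<sigma> a z)))
    \<and> (\<forall>k l. k \<noteq> l \<longrightarrow> ip \<sigma> a (poly (OP \<sigma> a k)) (poly (OP \<sigma> a l)) = 0)
    \<and> (\<forall>k. ip \<sigma> a (poly (OP \<sigma> a k)) (poly (OP \<sigma> a k)) =
          complex_of_real (fact (k + 1) / \<sigma> ^ (k + 2)
            * (Fps (k + 1) \<sigma> (\<sigma> * (cmod a)\<^sup>2) / Fps k \<sigma> (\<sigma> * (cmod a)\<^sup>2))))
    \<and> (\<forall>k\<ge>1. \<forall>z. z * poly (OP \<sigma> a k) z =
          poly (OP \<sigma> a (k + 1)) z
          + (- a * complex_of_real (Fps k \<sigma> (\<sigma> * (cmod a)\<^sup>2) / Fps (k + 1) \<sigma> (\<sigma> * (cmod a)\<^sup>2)))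
              * poly (OP \<sigma> a k) z
          + z * (a * complex_of_real (Fps (k - 1) \<sigma> (\<sigma> * (cmod a)\<^sup>2) / Fps k \<sigma> (\<sigma> * (cmod a)\<^sup>2)))
              * poly (OP \<sigma> a (k - 1)) z)"
proof (intro conjI allI impI)
  note s = assms
  fix k
  show "degree (OP \<sigma> a k) = k" "lead_coeff (OP \<sigma> a k) = 1" using degree_OP[OF s] by auto
next
  fix k l
  show "integrable lborel (\<lambda>z. poly (OP \<sigma> a k) z * cnj (poly (OP \<sigma> a l) z) * complex_of_real (wgt \<sigma> a z))"
    by (rule integrand_integrable[OF assms])
next
  fix k l :: nat
  assume kl: "k \<noteq> l"
  have "(\<Sum>j\<le>k. \<Sum>m\<le>l. (cc \<sigma> a k j * cnj (cc \<sigma> a l m)) * M \<sigma> a j m) = 0"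
    using kl IP_lt[OF assms, of l k a] IP_gt[OF assms, of k l a] by (cases "k < l") auto
  then show "ip \<sigma> a (poly (OP \<sigma> a k)) (poly (OP \<sigma> a l)) = 0"
    unfolding ip_def integral_IP[OF assms] by simp
next
  fix k
  have "ip \<sigma> a (poly (OP \<sigma> a k)) (poly (OP \<sigma> a k)) = S \<sigma> a k k / of_real pi"
    unfolding ip_def integral_IP[OF assms] IP_eq[OF assms] ..
  also have "\<dots> = complex_of_real (fact (k + 1) / \<sigma> ^ (k + 2) * (fF \<sigma> a (k + 1) / fF \<sigma> a k))"
    unfolding S_kk[OF assms] by simp
  finally show "ip \<sigma> a (poly (OP \<sigma> a k)) (poly (OP \<sigma> a k)) =
          complex_of_real (fact (k + 1) / \<sigma> ^ (k + 2)
            * (Fps (k + 1) \<sigma> (\<sigma> * (cmod a)\<^sup>2) / Fps k \<sigma> (\<sigma> * (cmod a)\<^sup>2)))"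
    unfolding fF_def .
next
  fix k :: nat and z
  assume "k \<ge> 1"
  then show "z * poly (OP \<sigma> a k) z =
          poly (OP \<sigma> a (k + 1)) z
          + (- a * complex_of_real (Fps k \<sigma> (\<sigma> * (cmod a)\<^sup>2) / Fps (k + 1) \<sigma> (\<sigma> * (cmod a)\<^sup>2)))
              * poly (OP \<sigma> a k) z
          + z * (a * complex_of_real (Fps (k - 1) \<sigma> (\<sigma> * (cmod a)\<^sup>2) / Fps k \<sigma> (\<sigma> * (cmod a)\<^sup>2)))
              * poly (OP \<sigma> a (k - 1)) z"
    by (rule OP_recurrence[OF assms])
qed

end
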